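(* Let $p$ be an odd prime, let $m,k$ be integers with $0<k\le\lfloor m/2\rfloor$ and $m/\gcd(m,k)$ odd, and put $l=\gcd(m,k)$. Let $\alpha\in\mathbb{F}_{p^l}$, $\alpha\neq 0$, be a non-square in $\mathbb{F}_{p^m}$, and let $\sigma(x)=x^{p^r}$ with $0\le r\le\lfloor m/2\rfloor$. With $x\circ_k y=x^{p^k}y+y^{p^k}x$, define on $\mathbb{F}_{p^m}^2$ the presemifield multiplication $(a,b)*(c,d)=(a\circ_k c+\alpha\,\sigma(b\circ_k d),\ ad+bc)$, let $L(a,b)=(a,b)*(1,0)=(a+a^{p^k},b)$ (an additive bijection of $\mathbb{F}_{p^m}^2$), and let $\mathbb{S}_{k,\sigma}=(\mathbb{F}_{p^m}^2,+,\star)$ be the semifield with multiplication defined by $L(x)\star L(y)=x*y$. Then: (1) if $\sigma$ is the identity, the middle nucleus $N_m(\mathbb{S}_{k,\sigma})$ is isomorphic to $\mathbb{F}_{p^{2l}}$; (2) if $\sigma$ is not the identity, the middle nucleus $N_m(\mathbb{S}_{k,\sigma})$ is isomorphic to $\mathbb{F}_{p^l}$.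
   Context: The middle nucleus of a semifield $(\mathbb{S},+,\star)$ is $N_m(\mathbb{S})=\{a\in\mathbb{S}:(x\star a)\star y=x\star(a\star y)\text{ for all }x,y\in\mathbb{S}\}$; it is a finite field under the semifield operations. The multiplication $*$ defines a presemifield (distributive, no zero divisors), and $\star$ defines a (commutative) semifield with identity $L(1,0)$. *)

theory Defs
  imports Main "HOL-Library.Product_Plus" "HOL-Library.Cardinality" "HOL-Computational_Algebra.Primes"
begin

definition circk :: "nat \<Rightarrow> nat \<Rightarrow> 'a::field \<Rightarrow> 'a \<Rightarrow> 'a" where
  "circk p k x y = x ^ (p ^ k) * y + y ^ (p ^ k) * x"

definition pmul :: "nat \<Rightarrow> nat \<Rightarrow> 'a::field \<Rightarrow> ('a \<Rightarrow> 'a) \<Rightarrow> 'a \<times> 'a \<Rightarrow> 'a \<times> 'a \<Rightarrow> 'a \<times> 'a" where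
  "pmul p k \<alpha> \<sigma> u v =
     (circk p k (fst u) (fst v) + \<alpha> * \<sigma> (circk p k (snd u) (snd v)),
      fst u * snd v + snd u * fst v)"

definition Lmap :: "nat \<Rightarrow> nat \<Rightarrow> 'a::field \<Rightarrow> ('a \<Rightarrow> 'a) \<Rightarrow> 'a \<times> 'a \<Rightarrow> 'a \<times> 'a" where
  "Lmap p k \<alpha> \<sigma> u = pmul p k \<alpha> \<sigma> u (1, 0)"

definition smul :: "nat \<Rightarrow> nat \<Rightarrow> 'a::field \<Rightarrow> ('a \<Rightarrow> 'a) \<Rightarrow> 'a \<times> 'a \<Rightarrow> 'a \<times> 'a \<Rightarrow> 'a \<times> 'a" where
  "smul p k \<alpha> \<sigma> u v =
     pmul p k \<alpha> \<sigma> (inv (Lmap p k \<alpha> \<sigma>) u) (inv (Lmap p k \<alpha> \<sigma>) v)"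

definition middle_nucleus :: "('s \<Rightarrow> 's \<Rightarrow> 's) \<Rightarrow> 's set" where
  "middle_nucleus mul = {a. \<forall>x y. mul (mul x a) y = mul x (mul a y)}"

definition iso_onto_field :: "'s::plus set \<Rightarrow> ('s \<Rightarrow> 's \<Rightarrow> 's) \<Rightarrow> ('s \<Rightarrow> 'b::field) \<Rightarrow> bool" where
  "iso_onto_field S mul f \<longleftrightarrow> bij_betw f S UNIV \<and>
     (\<forall>x\<in>S. \<forall>y\<in>S. f (x + y) = f x + f y \<and> f (mul x y) = f x * f y)"

end

theory Submission
  imports Defs "HOL-Algebra.Algebraic_Closure_Type" "HOL-Number_Theory.Residues"
begin
hide_const (open) Divisibility.prime



section \<open>Finite field generalities\<close>

lemma cyclic_gen:
  fixes dummy :: "'c::{field,finite}"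
  shows "\<exists>g::'c. \<forall>x. x \<noteq> 0 \<longrightarrow> (\<exists>i::nat. x = g ^ i)"
proof -
  interpret R: field "ring_of_type_algebra :: 'c ring" by (rule field_from_type_algebra)
  have "\<exists>a\<in>carrier (Multiplicative_Group.mult_of (ring_of_type_algebra :: 'c ring)).
     carrier (Multiplicative_Group.mult_of (ring_of_type_algebra :: 'c ring)) = {a [^]\<^bsub>ring_of_type_algebra :: 'c ring\<^esub> i | i::nat. i \<in> UNIV}"
    by (rule R.finite_field_mult_group_has_gen) (simp add: ring_of_type_algebra_def)
  then obtain a where a: "carrier (Multiplicative_Group.mult_of (ring_of_type_algebra :: 'c ring)) = {a [^]\<^bsub>ring_of_type_algebra :: 'c ring\<^esub> i | i::nat. i \<in> UNIV}" by blast
  have pw: "a [^]\<^bsub>ring_of_type_algebra :: 'c ring\<^esub> (i::nat) = a ^ i" for i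
    by (induction i) (simp_all add: ring_of_type_algebra_def)
  show ?thesis
  proof (rule exI[of _ a], intro allI impI)
    fix x :: 'c assume "x \<noteq> 0"
    hence "x \<in> carrier (Multiplicative_Group.mult_of (ring_of_type_algebra :: 'c ring))"
      by (simp add: ring_of_type_algebra_def)
    then show "\<exists>i::nat. x = a ^ i" using a pw by auto
  qed
qed

lemma char_eq:
  assumes "prime p" "CARD('a::{field,finite}) = p ^ m" "m > 0"
  shows "CHAR('a) = p"
proof -
  have "CHAR('a) dvd p ^ m" using CHAR_dvd_CARD[where 'a='a] assms by simp
  moreover have "prime CHAR('a)"
    by (rule prime_CHAR_semidom) (simp add: finite_imp_CHAR_pos)
  ultimately have "CHAR('a) dvd p" using prime_dvd_power by blast
  thus ?thesis using \<open>prime CHAR('a)\<close> assms(1)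
    unfolding prime_nat_iff by (metis not_prime_1 \<open>prime CHAR('a)\<close>)
qed

lemma pow_card_same:
  fixes x :: "'a :: {field,finite}"
  shows "x ^ CARD('a) = x"
proof (cases "x = 0")
  case False
  have "x * (\<Prod>y\<in>UNIV-{0}. x * y) = x * x ^ (card (UNIV :: 'a set) - 1) * \<Prod>(UNIV-{0})"
    by (simp add: prod.distrib mult_ac)
  also have "x * x ^ (card (UNIV :: 'a set) - 1) = x ^ Suc (card (UNIV :: 'a set) - 1)"
    by (subst power_Suc) auto
  also have "Suc (card (UNIV :: 'a set) - 1) = card (UNIV :: 'a set)"
    using finite_UNIV_card_ge_0[where ?'a = 'a] by simp
  also have "(\<Prod>y\<in>UNIV-{0}. x * y) = (\<Prod>y\<in>UNIV-{0}. y)"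
    by (rule prod.reindex_bij_witness[of _ "\<lambda>y. y / x" "\<lambda>y. x * y"]) (use False in auto)
  finally show ?thesis
    by simp
qed (use finite_UNIV_card_ge_0[where ?'a = 'a] in auto)

lemma frob_add:
  fixes x y :: "'a::field"
  assumes "CHAR('a) = p" "prime p"
  shows "(x + y) ^ (p ^ n) = x ^ (p ^ n) + y ^ (p ^ n)"
  using freshmans_dream'[of "p ^ n" n x y] assms by simp

lemma frob_diff:
  fixes x y :: "'a::field"
  assumes "CHAR('a) = p" "prime p"
  shows "(x - y) ^ (p ^ n) = x ^ (p ^ n) - y ^ (p ^ n)"
  using frob_add[OF assms, of "x - y" y n] by simp

lemma frob_minus:
  fixes x :: "'a::field"
  assumes "CHAR('a) = p" "prime p"
  shows "(- x) ^ (p ^ n) = - (x ^ (p ^ n))"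
  using frob_diff[OF assms, of 0 x n] assms(2) by (simp add: prime_gt_0_nat)

lemma frob_inj:
  fixes x y :: "'a::field"
  assumes "CHAR('a) = p" "prime p" "x ^ (p ^ n) = y ^ (p ^ n)"
  shows "x = y"
  using frob_diff[OF assms(1,2), of x y n] assms(3) by simp

lemma fix_mult:
  fixes x :: "'a::field"
  assumes "x ^ (p ^ a) = x"
  shows "x ^ (p ^ (a * j)) = x"
proof (induction j)
  case (Suc j)
  have "p ^ (a * Suc j) = p ^ (a * j) * p ^ a" by (simp add: power_add)
  hence "x ^ (p ^ (a * Suc j)) = (x ^ (p ^ (a * j))) ^ (p ^ a)"
    by (simp only: power_mult)
  thus ?case using Suc assms by simp
qed simp

lemma fix_dvd:
  fixes x :: "'a::field"
  assumes "x ^ (p ^ a) = x" "a dvd b"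
  shows "x ^ (p ^ b) = x"
  using assms fix_mult[OF assms(1)] by (auto elim!: dvdE)

lemma fix_mod:
  fixes x :: "'a::field"
  assumes "x ^ (p ^ a) = x" "x ^ (p ^ b) = x"
  shows "x ^ (p ^ (b mod a)) = x"
proof -
  have "b = a * (b div a) + b mod a" by simp
  hence "x ^ (p ^ b) = (x ^ (p ^ (a * (b div a)))) ^ (p ^ (b mod a))"
    by (metis power_add power_mult)
  thus ?thesis using assms fix_mult[OF assms(1)] by simp
qed

lemma fix_gcd:
  fixes x :: "'a::field"
  assumes "x ^ (p ^ a) = x" "x ^ (p ^ b) = x"
  shows "x ^ (p ^ (gcd a b)) = x"
  using assms
proof (induction a b rule: gcd_nat_induct)
  case (step m n)
  have "x ^ (p ^ (m mod n)) = x" using fix_mod step.prems by blast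
  with step show ?case by (simp add: gcd_non_0_nat)
qed simp

lemma nat_pow_minus_one_dvd:
  fixes x :: nat
  assumes "x \<ge> 1"
  shows "(x - 1) dvd (x ^ n - 1)"
proof (induction n)
  case (Suc n)
  have "x ^ n \<ge> 1" using assms by simp
  hence "x ^ Suc n - 1 = x * (x ^ n - 1) + (x - 1)"
    using assms by (simp add: algebra_simps diff_mult_distrib2)
  thus ?case using Suc by simp
qed simp




lemma card_fix:
  fixes dummy :: "'a::{field,finite}"
  assumes "prime p" "CARD('a) = p ^ m" "l dvd m" "l > 0"
  shows "card {x::'a. x ^ (p ^ l) = x} = p ^ l"
proof -
  define Q where "Q = p ^ l"
  define M where "M = p ^ m"
  have p2: "p \<ge> 2" using assms(1) prime_ge_2_nat by blast
  have "p ^ 1 \<le> p ^ l" using p2 assms(4) by (intro power_increasing) auto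
  hence Q2: "Q \<ge> 2" unfolding Q_def using p2 by simp
  have "card {0, 1::'a} \<le> CARD('a)" by (intro card_mono) auto
  hence "CARD('a) \<ge> 2" by simp
  hence "m > 0" using assms(2) by (cases m) auto
  obtain j where mj: "m = l * j" using assms(3) by blast
  have "j > 0" using mj \<open>m > 0\<close> by auto
  have MQ: "M = Q ^ j" unfolding M_def Q_def mj by (simp add: power_mult)
  have "Q ^ 1 \<le> Q ^ j" using \<open>j > 0\<close> Q2 by (intro power_increasing) auto
  hence "M \<ge> Q" unfolding MQ by simp
  define K where "K = {x::'a. x ^ Q = x}"
  have finK: "finite K" by simp
  define P :: "'a poly" where "P = monom 1 Q - monom 1 1"
  have coeffP: "coeff P Q = 1" using Q2 by (simp add: P_def coeff_monom)
  hence "P \<noteq> 0" by auto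
  have "degree P \<le> Q" unfolding P_def using Q2
    by (metis degree_diff_le degree_monom_le le_trans one_le_numeral order.trans)
  have KP: "K = {x. poly P x = 0}" by (simp add: K_def P_def poly_monom)
  have up: "card K \<le> Q" using card_poly_roots_bound[OF \<open>P \<noteq> 0\<close>] \<open>degree P \<le> Q\<close> KP by simp
  have "(Q - 1) dvd (M - 1)" unfolding MQ using nat_pow_minus_one_dvd Q2 by simp
  then obtain N where N: "M - 1 = (Q - 1) * N" by blast
  have "N > 0" using N \<open>M \<ge> Q\<close> Q2 by (cases N) auto
  define A where "A = (UNIV::'a set) - {0}"
  have cardA: "card A = M - 1" unfolding A_def M_def using assms(2) by (simp add: card_Diff_singleton)
  have img: "(\<lambda>x. x ^ N) ` A \<subseteq> K - {0}"
  proof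
    fix y assume "y \<in> (\<lambda>x. x ^ N) ` A"
    then obtain x where x: "x \<in> A" "y = x ^ N" by blast
    have "x ^ M = x" unfolding M_def using pow_card_same[of x] assms(2) by simp
    moreover have "M = Suc (M - 1)" using \<open>M \<ge> Q\<close> Q2 by simp
    ultimately have "x ^ (M - 1) * x = 1 * x" by (metis power_Suc2 mult_1)
    hence "x ^ (M - 1) = 1" using x(1) unfolding A_def by simp
    hence "y ^ (Q - 1) = 1" using x N by (simp add: power_mult[symmetric] mult.commute)
    moreover have "Q = Suc (Q - 1)" using Q2 by simp
    ultimately have "y ^ Q = y" by (metis power_Suc2 mult_1)
    moreover have "y \<noteq> 0" using x unfolding A_def using \<open>N > 0\<close> by simp
    ultimately show "y \<in> K - {0}" unfolding K_def by simp
  qed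
  have fib: "card {x \<in> A. x ^ N = y} \<le> N" for y :: 'a
  proof -
    define R :: "'a poly" where "R = monom 1 N - [:y:]"
    have "coeff R N = 1" using \<open>N > 0\<close> by (cases N) (simp_all add: R_def coeff_monom)
    hence "R \<noteq> 0" by auto
    have "degree R \<le> N" unfolding R_def
      by (metis degree_diff_le degree_monom_le degree_pCons_0 le0 le_trans)
    have "{x \<in> A. x ^ N = y} \<subseteq> {x. poly R x = 0}" by (auto simp: R_def poly_monom)
    hence "card {x \<in> A. x ^ N = y} \<le> card {x. poly R x = 0}"
      by (intro card_mono) simp_all
    also have "\<dots> \<le> degree R" by (rule card_poly_roots_bound[OF \<open>R \<noteq> 0\<close>])
    finally show ?thesis using \<open>degree R \<le> N\<close> by simp
  qed
  have "A = (\<Union>y\<in>(\<lambda>x. x ^ N) ` A. {x \<in> A. x ^ N = y})" by blast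
  hence "card A \<le> (\<Sum>y\<in>(\<lambda>x. x ^ N) ` A. card {x \<in> A. x ^ N = y})"
    using card_UN_le[of "(\<lambda>x. x ^ N) ` A" "\<lambda>y. {x \<in> A. x ^ N = y}"] by simp
  also have "\<dots> \<le> card ((\<lambda>x. x ^ N) ` A) * N"
    using sum_bounded_above[of "(\<lambda>x. x ^ N) ` A" "\<lambda>y. card {x \<in> A. x ^ N = y}" N] fib by simp
  also have "\<dots> \<le> card (K - {0}) * N"
    using img by (intro mult_le_mono1 card_mono) auto
  finally have "(Q - 1) * N \<le> card (K - {0}) * N" using cardA N by simp
  hence "Q - 1 \<le> card (K - {0})" using \<open>N > 0\<close> by simp
  moreover have "0 \<in> K" unfolding K_def using Q2 by simp
  ultimately have "Q \<le> card K" using finK Q2 by (simp add: card_Diff_singleton)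
  with up show ?thesis unfolding K_def Q_def by simp
qed




lemma gen_order:
  fixes g :: "'b::{field,finite}"
  assumes gen: "\<forall>x. x \<noteq> 0 \<longrightarrow> (\<exists>i::nat. x = g ^ i)" and c2: "CARD('b) > 2" and gn: "g ^ n = 1"
  shows "(CARD('b) - 1) dvd n"
proof -
  define M where "M = CARD('b)"
  have "g \<noteq> 0"
  proof
    assume g0: "g = 0"
    have "x \<in> {0,1}" for x :: 'b
    proof (cases "x = 0")
      case False
      then obtain i where "x = g ^ i" using gen by blast
      thus ?thesis using g0 by (cases i) auto
    qed simp
    hence "(UNIV::'b set) \<subseteq> {0,1}" by auto
    hence "CARD('b) \<le> card {0,1::'b}" by (intro card_mono) auto
    also have "\<dots> \<le> 2" by (simp add: card_insert_if)
    finally show False using c2 by simp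
  qed
  have "g ^ M = g" unfolding M_def by (rule pow_card_same)
  moreover have "M = Suc (M - 1)" using c2 unfolding M_def by simp
  ultimately have "g ^ (M - 1) * g = 1 * g" by (metis power_Suc2 mult_1)
  hence gM: "g ^ (M - 1) = 1" using \<open>g \<noteq> 0\<close> by simp
  define r where "r = n mod (M - 1)"
  have "n = (M - 1) * (n div (M - 1)) + r" unfolding r_def by simp
  hence "g ^ n = (g ^ (M - 1)) ^ (n div (M - 1)) * g ^ r" by (metis power_add power_mult)
  hence gr: "g ^ r = 1" using gn gM by simp
  show ?thesis
  proof (rule ccontr)
    assume "\<not> (CARD('b) - 1) dvd n"
    hence "r > 0" unfolding r_def M_def by (simp add: dvd_eq_mod_eq_0)
    have per: "g ^ i = g ^ (i mod r)" for i
    proof -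
      have "i = r * (i div r) + i mod r" by simp
      hence "g ^ i = (g ^ r) ^ (i div r) * g ^ (i mod r)" by (metis power_add power_mult)
      thus ?thesis using gr by simp
    qed
    have "(UNIV::'b set) - {0} \<subseteq> (\<lambda>i. g ^ i) ` {..<r}"
    proof
      fix x :: 'b assume "x \<in> UNIV - {0}"
      then obtain i where "x = g ^ i" using gen by blast
      hence "x = g ^ (i mod r)" using per by simp
      moreover have "i mod r < r" using \<open>r > 0\<close> by simp
      ultimately show "x \<in> (\<lambda>i. g ^ i) ` {..<r}" by blast
    qed
    hence "card ((UNIV::'b set) - {0}) \<le> card ((\<lambda>i. g ^ i) ` {..<r})" by (intro card_mono) auto
    also have "\<dots> \<le> r" using card_image_le[of "{..<r}" "\<lambda>i. g ^ i"] by simp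
    finally have "M - 1 \<le> r" unfolding M_def by (simp add: card_Diff_singleton)
    moreover have "r < M - 1" unfolding r_def using c2 M_def by simp
    ultimately show False by simp
  qed
qed

lemma sub_gen:
  fixes g :: "'b::{field,finite}"
  assumes gen: "\<forall>x. x \<noteq> 0 \<longrightarrow> (\<exists>i::nat. x = g ^ i)" and card: "CARD('b) = Q * Q" and Q1: "Q > 1"
    and x: "x ^ Q = x" "x \<noteq> 0"
  shows "\<exists>j. x = g ^ ((Q + 1) * j)"
proof -
  obtain i where i: "x = g ^ i" using gen x(2) by blast
  have "Q = Suc (Q - 1)" using Q1 by simp
  hence "x ^ (Q - 1) * x = 1 * x" using x(1) by (metis power_Suc2 mult_1)
  hence "x ^ (Q - 1) = 1" using x(2) by simp
  hence "g ^ (i * (Q - 1)) = 1" using i by (simp add: power_mult)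
  moreover have "Q * Q \<ge> 2 * 2" using Q1 by (intro mult_le_mono) auto
  hence "CARD('b) > 2" using card by simp
  ultimately have "(CARD('b) - 1) dvd (i * (Q - 1))" using gen_order[OF gen] by blast
  moreover obtain t where t: "Q = Suc t" using Q1 by (cases Q) auto
  hence "CARD('b) - 1 = (Q + 1) * (Q - 1)" using card by simp
  ultimately have "(Q + 1) * (Q - 1) dvd i * (Q - 1)" by simp
  moreover have "Q - 1 \<noteq> 0" using Q1 by simp
  ultimately have "(Q + 1) dvd i" using dvd_times_right_cancel_iff by blast
  then obtain j where "i = (Q + 1) * j" by blast
  thus ?thesis using i by blast
qed

section \<open>Evaluation of integer polynomials\<close>

definition evp :: "'b::comm_ring_1 \<Rightarrow> int poly \<Rightarrow> 'b" where
  "evp x h = poly (map_poly of_int h) x"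

lemma mp_add: "map_poly (of_int :: int \<Rightarrow> 'b::comm_ring_1) (p + q) = map_poly of_int p + map_poly of_int q"
  by (rule poly_eqI) (simp add: coeff_map_poly)

lemma mp_diff: "map_poly (of_int :: int \<Rightarrow> 'b::comm_ring_1) (p - q) = map_poly of_int p - map_poly of_int q"
  by (rule poly_eqI) (simp add: coeff_map_poly)

lemma mp_mult: "map_poly (of_int :: int \<Rightarrow> 'b::comm_ring_1) (p * q) = map_poly of_int p * map_poly of_int q"
  by (rule poly_eqI) (simp add: coeff_map_poly coeff_mult of_int_sum)

lemma mp_smult: "map_poly (of_int :: int \<Rightarrow> 'b::comm_ring_1) (smult c p) = smult (of_int c) (map_poly of_int p)"
  by (rule poly_eqI) (simp add: coeff_map_poly)

lemma evp_add [simp]: "evp x (p + q) = evp x p + evp x q"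
  by (simp add: evp_def mp_add)
lemma evp_diff [simp]: "evp x (p - q) = evp x p - evp x q"
  by (simp add: evp_def mp_diff)
lemma evp_mult [simp]: "evp x (p * q) = evp x p * evp x q"
  by (simp add: evp_def mp_mult)
lemma evp_smult [simp]: "evp x (smult c p) = of_int c * evp x p"
  by (simp add: evp_def mp_smult)
lemma evp_one [simp]: "evp x 1 = 1"
  by (simp add: evp_def)
lemma evp_zero [simp]: "evp x 0 = 0"
  by (simp add: evp_def)
lemma evp_monom [simp]: "evp x (monom c n) = of_int c * x ^ n"
  by (simp add: evp_def map_poly_monom poly_monom)
lemma evp_power [simp]: "evp x (p ^ n) = evp x p ^ n"
  by (induction n) simp_all

lemma trunc_exists:
  fixes h :: "int poly"
  shows "\<exists>h'. map_poly (of_int::int\<Rightarrow>'c::comm_ring_1) h' = map_poly of_int h \<and>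
             degree h' \<le> degree (map_poly (of_int::int\<Rightarrow>'c) h)"
proof -
  define d where "d = degree (map_poly (of_int::int\<Rightarrow>'c) h)"
  define h' where "h' = Poly (map (coeff h) [0..<Suc d])"
  have ch: "coeff h' i = (if i \<le> d then coeff h i else 0)" for i
    by (simp add: h'_def nth_default_def del: upt_Suc)
  have "map_poly (of_int::int\<Rightarrow>'c) h' = map_poly of_int h"
  proof (rule poly_eqI)
    fix i
    show "coeff (map_poly (of_int::int\<Rightarrow>'c) h') i = coeff (map_poly of_int h) i"
    proof (cases "i \<le> d")
      case False
      hence "coeff (map_poly (of_int::int\<Rightarrow>'c) h) i = 0" unfolding d_def by (simp add: coeff_eq_0)
      thus ?thesis using False by (simp add: coeff_map_poly ch)
    qed (simp add: coeff_map_poly ch)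
  qed
  moreover have "degree h' \<le> d" by (rule degree_le) (simp add: ch)
  ultimately show ?thesis unfolding d_def by blast
qed




lemma of_int_zero_transfer:
  assumes "CHAR('c::ring_1) = CHAR('a::ring_1)" "of_int n = (0::'c)"
  shows "of_int n = (0::'a)"
  using assms of_int_eq_0_iff_char_dvd[where 'a='c] of_int_eq_0_iff_char_dvd[where 'a='a] by simp

lemma card_ge2: "CARD('a::{field,finite}) \<ge> 2"
proof -
  have "card {0, 1::'a} \<le> CARD('a)" by (intro card_mono) auto
  thus ?thesis by simp
qed

lemma inverse_pow:
  fixes z :: "'c::{field,finite}"
  assumes "z \<noteq> 0"
  shows "z * z ^ (CARD('c) - 2) = 1"
proof -
  have "CARD('c) = Suc (Suc (CARD('c) - 2))" using card_ge2[where 'a='c] by simp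
  hence "z ^ (CARD('c) - 2) * z * z = 1 * z" using pow_card_same[of z]
    by (metis power_Suc2 mult_1)
  hence "z ^ (CARD('c) - 2) * z = 1" using assms by simp
  thus ?thesis by (simp add: mult.commute)
qed

lemma field_embed:
  fixes \<gamma> :: "'c::{field,finite}" and S :: "'c set"
  assumes charc: "CHAR('c) = p" and chara: "CHAR('a::{field,finite}) = p"
    and Q1: "Q > 1" and \<gamma>Q: "\<gamma> ^ Q = \<gamma>"
    and cT: "card {x::'a. x ^ Q = x} = Q"
    and gen: "\<forall>x\<in>S. \<exists>h. x = evp \<gamma> h"
    and SQ: "\<forall>x\<in>S. x ^ Q = x"
  shows "\<exists>\<phi>::'c \<Rightarrow> 'a. inj_on \<phi> S \<and> \<phi> ` S \<subseteq> {x. x ^ Q = x} \<and>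
          (\<forall>x\<in>S. \<forall>y\<in>S. \<phi> (x + y) = \<phi> x + \<phi> y \<and> \<phi> (x * y) = \<phi> x * \<phi> y)"
proof -
  have chareq: "CHAR('c) = CHAR('a)" using charc chara by simp
  define P where "P h \<longleftrightarrow> evp \<gamma> h = 0 \<and> of_int (lead_coeff h) \<noteq> (0::'c)" for h
  define hQ :: "int poly" where "hQ = monom 1 Q - monom 1 1"
  have chQ: "coeff hQ Q = 1" using Q1 by (simp add: hQ_def coeff_monom)
  have "degree (monom (1::int) Q) \<le> Q" by (rule degree_monom_le)
  moreover have "degree (monom (1::int) 1) \<le> Q" using Q1 degree_monom_le[of "1::int" 1] by simp
  ultimately have "degree hQ \<le> Q" unfolding hQ_def by (intro degree_diff_le)
  hence dhQ: "degree hQ = Q" using chQ le_degree[of hQ Q] by simp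
  have PhQ: "P hQ" unfolding P_def using \<gamma>Q dhQ chQ by (simp add: hQ_def)
  obtain f0 where Pf0: "P f0" and minf0: "\<And>h. P h \<Longrightarrow> degree f0 \<le> degree h"
    using ex_has_least_nat[of P hQ degree] PhQ by blast
  define lc where "lc = lead_coeff f0"
  have lcc: "of_int lc \<noteq> (0::'c)" using Pf0 unfolding P_def lc_def by simp
  have lca: "of_int lc \<noteq> (0::'a)" using lcc of_int_zero_transfer[of lc] chareq by metis
  have f0nz: "f0 \<noteq> 0" using lcc lc_def by auto
  have "degree f0 \<noteq> 0"
  proof
    assume "degree f0 = 0"
    then have "f0 = [:lc:]" unfolding lc_def using degree_0_id by metis
    hence "evp \<gamma> f0 = of_int lc" by (simp add: evp_def map_poly_pCons)
    thus False using Pf0 lcc unfolding P_def by simp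
  qed
  have KC: "\<forall>i. of_int (coeff r i) = (0::'c)" if ev0: "evp \<gamma> h = 0" and qr: "pseudo_divmod h f0 = (q, r)" for h q r
  proof (rule ccontr)
    assume "\<not> (\<forall>i. of_int (coeff r i) = (0::'c))"
    then obtain i where i: "of_int (coeff r i) \<noteq> (0::'c)" by blast
    have eq: "smult (lc ^ (Suc (degree h) - degree f0)) h = f0 * q + r"
      using pseudo_divmod(1)[OF f0nz qr] unfolding lc_def by simp
    have rdeg: "r = 0 \<or> degree r < degree f0" using pseudo_divmod(2)[OF f0nz qr] .
    have "evp \<gamma> (smult (lc ^ (Suc (degree h) - degree f0)) h) = evp \<gamma> (f0 * q + r)"
      using eq by simp
    hence evr: "evp \<gamma> r = 0" using ev0 Pf0 unfolding P_def by simp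
    define H where "H = map_poly (of_int::int\<Rightarrow>'c) r"
    have "coeff H i \<noteq> 0" using i by (simp add: H_def coeff_map_poly)
    hence Hnz: "H \<noteq> 0" by auto
    hence "r \<noteq> 0" by (auto simp: H_def)
    obtain r' where r': "map_poly (of_int::int\<Rightarrow>'c) r' = H" "degree r' \<le> degree H"
      using trunc_exists[of r] unfolding H_def by blast
    have "coeff (map_poly (of_int::int\<Rightarrow>'c) r') (degree H) \<noteq> 0" using r'(1) Hnz by simp
    hence c': "of_int (coeff r' (degree H)) \<noteq> (0::'c)" by (simp add: coeff_map_poly)
    hence "coeff r' (degree H) \<noteq> 0" by auto
    hence dr': "degree r' = degree H" using r'(2) le_degree by fastforce
    have "evp \<gamma> r' = evp \<gamma> r" unfolding evp_def using r'(1) H_def by simp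
    hence "P r'" unfolding P_def using evr c' dr' by simp
    hence "degree f0 \<le> degree r'" by (rule minf0)
    moreover have "degree H \<le> degree r" unfolding H_def by (rule map_poly_degree_leq)
    ultimately show False using rdeg \<open>r \<noteq> 0\<close> dr' by simp
  qed
  have KA: "map_poly (of_int::int\<Rightarrow>'a) r = 0" if "\<forall>i. of_int (coeff r i) = (0::'c)" for r
  proof (rule poly_eqI)
    fix i
    have "of_int (coeff r i) = (0::'a)" using that of_int_zero_transfer[OF chareq] by blast
    thus "coeff (map_poly (of_int::int\<Rightarrow>'a) r) i = coeff 0 i" by (simp add: coeff_map_poly)
  qed
  obtain q0 r0 where qr0: "pseudo_divmod hQ f0 = (q0, r0)" by (cases "pseudo_divmod hQ f0") auto
  define e where "e = Suc (degree hQ) - degree f0"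
  have eq0: "smult (lc ^ e) hQ = f0 * q0 + r0" using pseudo_divmod(1)[OF f0nz qr0] unfolding lc_def e_def by simp
  have r0a: "map_poly (of_int::int\<Rightarrow>'a) r0 = 0" using KA KC[OF _ qr0] PhQ unfolding P_def by blast
  define Fa where "Fa = map_poly (of_int::int\<Rightarrow>'a) f0"
  define Qa where "Qa = map_poly (of_int::int\<Rightarrow>'a) q0"
  define Ha where "Ha = map_poly (of_int::int\<Rightarrow>'a) hQ"
  have eqa: "smult (of_int (lc ^ e)) Ha = Fa * Qa"
    using arg_cong[OF eq0, of "map_poly (of_int::int\<Rightarrow>'a)"] r0a
    by (simp add: Ha_def Fa_def Qa_def mp_smult mp_add mp_mult)
  have dFa: "degree Fa = degree f0" unfolding Fa_def using lca lc_def by (simp add: map_poly_degree_eq)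
  have dHa: "degree Ha = Q" unfolding Ha_def using dhQ chQ by (simp add: map_poly_degree_eq)
  have lce: "of_int (lc ^ e) \<noteq> (0::'a)" using lca by simp
  have "\<exists>\<beta>. poly Fa \<beta> = 0"
  proof (rule ccontr)
    assume nr: "\<not> (\<exists>\<beta>. poly Fa \<beta> = 0)"
    have Ha0: "Ha \<noteq> 0" using dHa Q1 by auto
    hence FQ: "Fa * Qa \<noteq> 0" using eqa lce by (metis smult_eq_0_iff)
    hence Qa0: "Qa \<noteq> 0" and Fa0: "Fa \<noteq> 0" by auto
    have "degree (Fa * Qa) = Q" using eqa dHa lce by (metis degree_smult_eq)
    hence dQa: "degree Qa < Q" using degree_mult_eq[OF Fa0 Qa0] dFa \<open>degree f0 \<noteq> 0\<close> by simp
    have "{x::'a. x ^ Q = x} \<subseteq> {x. poly Qa x = 0}"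
    proof
      fix x :: 'a assume "x \<in> {x. x ^ Q = x}"
      hence "poly Ha x = 0" by (simp add: Ha_def hQ_def mp_diff map_poly_monom poly_monom)
      hence "poly (Fa * Qa) x = 0" using arg_cong[OF eqa, of "\<lambda>f. poly f x"] by simp
      thus "x \<in> {x. poly Qa x = 0}" using nr by auto
    qed
    hence "card {x::'a. x ^ Q = x} \<le> card {x. poly Qa x = 0}" by (intro card_mono) auto
    also have "\<dots> \<le> degree Qa" by (rule card_poly_roots_bound[OF Qa0])
    finally show False using cT dQa by simp
  qed
  then obtain \<beta> :: 'a where \<beta>: "evp \<beta> f0 = 0" unfolding Fa_def evp_def by blast
  have KI: "evp \<beta> h = 0" if "evp \<gamma> h = 0" for h
  proof -
    obtain q r where qr: "pseudo_divmod h f0 = (q, r)" by (cases "pseudo_divmod h f0") auto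
    have eq: "smult (lc ^ (Suc (degree h) - degree f0)) h = f0 * q + r"
      using pseudo_divmod(1)[OF f0nz qr] unfolding lc_def by simp
    have "map_poly (of_int::int\<Rightarrow>'a) r = 0" using KA KC[OF that qr] by blast
    hence "evp \<beta> r = 0" by (simp add: evp_def)
    hence "of_int (lc ^ (Suc (degree h) - degree f0)) * evp \<beta> h = 0"
      using arg_cong[OF eq, of "evp \<beta>"] \<beta> by simp
    thus ?thesis using lca by simp
  qed
  have KE: "evp \<beta> h1 = evp \<beta> h2" if "evp \<gamma> h1 = evp \<gamma> h2" for h1 h2
    using KI[of "h1 - h2"] that by simp
  define \<phi> where "\<phi> x = evp \<beta> (SOME h. x = evp \<gamma> h)" for x
  have \<phi>ev: "\<phi> (evp \<gamma> h) = evp \<beta> h" for h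
  proof -
    have "evp \<gamma> h = evp \<gamma> (SOME h'. evp \<gamma> h = evp \<gamma> h')" by (rule someI[of _ h]) simp
    thus ?thesis unfolding \<phi>_def using KE by metis
  qed
  show ?thesis
  proof (intro exI conjI ballI)
    fix x y assume "x \<in> S" "y \<in> S"
    then obtain h1 h2 where h: "x = evp \<gamma> h1" "y = evp \<gamma> h2" using gen by blast
    have "\<phi> (evp \<gamma> (h1 + h2)) = evp \<beta> (h1 + h2)" "\<phi> (evp \<gamma> (h1 * h2)) = evp \<beta> (h1 * h2)"
      using \<phi>ev by blast+
    thus "\<phi> (x + y) = \<phi> x + \<phi> y" "\<phi> (x * y) = \<phi> x * \<phi> y" using h \<phi>ev by simp_all
  next
    show "inj_on \<phi> S"
    proof (rule inj_onI)
      fix x y assume "x \<in> S" "y \<in> S" and eq: "\<phi> x = \<phi> y"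
      then obtain h1 h2 where h: "x = evp \<gamma> h1" "y = evp \<gamma> h2" using gen by blast
      have z0: "evp \<beta> (h1 - h2) = 0" using eq h \<phi>ev by simp
      show "x = y"
      proof (rule ccontr)
        assume "x \<noteq> y"
        hence "evp \<gamma> (h1 - h2) \<noteq> 0" using h by simp
        hence "evp \<gamma> (h1 - h2) * evp \<gamma> (h1 - h2) ^ (CARD('c) - 2) = 1"
          by (intro inverse_pow) simp
        hence "evp \<gamma> ((h1 - h2) * (h1 - h2) ^ (CARD('c) - 2)) = evp \<gamma> 1"
          by simp
        hence "evp \<beta> ((h1 - h2) * (h1 - h2) ^ (CARD('c) - 2)) = evp \<beta> 1" by (rule KE)
        thus False using z0 by simp
      qed
    qed
  next
    show "\<phi> ` S \<subseteq> {x. x ^ Q = x}"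
    proof
      fix z assume "z \<in> \<phi> ` S"
      then obtain x where x: "x \<in> S" "z = \<phi> x" by blast
      then obtain h where h: "x = evp \<gamma> h" using gen by blast
      have "evp \<gamma> (h ^ Q) = evp \<gamma> h" using SQ x h by simp
      hence "evp \<beta> (h ^ Q) = evp \<beta> h" by (rule KE)
      thus "z \<in> {x. x ^ Q = x}" using x h \<phi>ev by simp
    qed
  qed
qed




lemma gcd2_aux:
  fixes m k :: nat
  assumes k0: "k > 0" and oddml: "odd (m div gcd m k)"
  shows "gcd (2 * k) m = gcd m k"
proof -
  define g where "g = gcd m k"
  have g0: "g > 0" using k0 g_def by simp
  obtain m' where m': "m = g * m'" using g_def by (metis gcd_dvd1 dvdE)
  obtain k' where k': "k = g * k'" using g_def by (metis gcd_dvd2 dvdE)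
  have "gcd m k = g * gcd m' k'" unfolding m' k' by (simp add: gcd_mult_distrib_nat)
  hence "g * gcd m' k' = g * 1" using g_def by (metis mult.right_neutral)
  hence "gcd m' k' = 1" using g0 nat_mult_eq_cancel1 by blast
  hence ck: "coprime k' m'" by (simp add: coprime_iff_gcd_eq_1 gcd.commute)
  have "m div g = m'" using m' g0 by simp
  hence "odd m'" using oddml g_def by simp
  hence "coprime 2 m'" by simp
  hence "coprime (2 * k') m'" using ck by simp
  hence "gcd (2 * k') m' = 1" by simp
  moreover have "gcd (2 * k) m = g * gcd (2 * k') m'" using m' k'
    by (simp add: gcd_mult_distrib_nat mult.left_commute)
  ultimately show ?thesis using g_def by simp
qed

locale sf =
  fixes p m k r :: nat and \<alpha> :: "'a::{field,finite}"
  assumes pr: "prime p" and oddp: "odd p" and cardA: "CARD('a) = p ^ m"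
    and k0: "0 < k" and km: "k \<le> m div 2" and oddml: "odd (m div gcd m k)"
    and \<alpha>l: "\<alpha> ^ (p ^ gcd m k) = \<alpha>" and \<alpha>0: "\<alpha> \<noteq> 0"
    and nsq: "\<not> (\<exists>y. \<alpha> = y ^ 2)" and rm: "r \<le> m div 2"
begin

abbreviation "l \<equiv> gcd m k"
abbreviation "q \<equiv> p ^ k"
abbreviation "\<sigma> \<equiv> (\<lambda>x::'a. x ^ (p ^ r))"
definition W :: "'a \<Rightarrow> 'a" where "W z = z ^ q + z"

lemma m0: "m > 0" using k0 km by simp
lemma charp: "CHAR('a) = p" using char_eq[OF pr cardA m0] .
lemma p2: "p \<ge> 2" using pr prime_ge_2_nat by blast
lemma q0: "q > 0" using p2 by simp
lemma l0: "l > 0" using k0 by simp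
lemma ldk: "l dvd k" by simp
lemma ldm: "l dvd m" by simp

lemma fadd: "(x + y) ^ (p ^ n) = x ^ (p ^ n) + y ^ (p ^ n)" for x y :: 'a
  using frob_add[OF charp pr] .
lemma fdiff: "(x - y) ^ (p ^ n) = x ^ (p ^ n) - y ^ (p ^ n)" for x y :: 'a
  using frob_diff[OF charp pr] .
lemma fminus: "(- x) ^ (p ^ n) = - (x ^ (p ^ n))" for x :: 'a
  using frob_minus[OF charp pr] .

lemma fixm: "x ^ (p ^ m) = x" for x :: 'a
  using pow_card_same[of x] cardA by simp

lemma fix_l_k: "x ^ (p ^ l) = x \<Longrightarrow> x ^ q = x" for x :: 'a
  using fix_dvd[of x p l k] by simp

lemma fix_k_l: "x ^ q = x \<Longrightarrow> x ^ (p ^ l) = x" for x :: 'a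
  using fix_gcd[of x p m k] fixm by simp

lemma \<alpha>q: "\<alpha> ^ q = \<alpha>" using fix_l_k[OF \<alpha>l] .

lemma gcd2: "gcd (2 * k) m = l"
  using gcd2_aux[OF k0 oddml] .

lemma two_ne0: "(2::'a) \<noteq> 0"
proof
  assume "(2::'a) = 0"
  hence "of_nat 2 = (0::'a)" by simp
  hence "p dvd 2" using of_nat_eq_0_iff_char_dvd charp by metis
  hence "p \<le> 2" by (rule dvd_imp_le) simp
  hence "p = 2" using p2 by simp
  thus False using oddp by simp
qed

lemma W_add: "W (x + y) = W x + W y" by (simp add: W_def fadd)
lemma W_diff: "W (x - y) = W x - W y" by (simp add: W_def fdiff)

lemma W_zero: "W z = 0 \<Longrightarrow> z = 0"
proof -
  assume "W z = 0"
  hence zq: "z ^ q = - z" unfolding W_def by (simp add: eq_neg_iff_add_eq_0)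
  have "z ^ (p ^ (k + k)) = (z ^ q) ^ q" by (simp add: power_add power_mult)
  also have "\<dots> = z" using zq fminus by simp
  finally have "z ^ (p ^ (2 * k)) = z" by (simp add: mult_2)
  hence "z ^ (p ^ gcd (2 * k) m) = z" using fix_gcd[of z p "2 * k" m] fixm by simp
  hence "z ^ (p ^ l) = z" using gcd2 by simp
  hence "z ^ q = z" by (rule fix_l_k)
  hence "2 * z = 0" using zq by simp
  thus "z = 0" using two_ne0 by simp
qed

lemma W_inj: "inj W"
proof (rule injI)
  fix x y assume "W x = W y"
  hence "W (x - y) = 0" by (simp add: W_diff)
  thus "x = y" using W_zero[of "x - y"] by simp
qed

lemma W_bij: "bij W" using W_inj finite_UNIV_inj_surj[of W] by (simp add: bij_def)

definition Wi :: "'a \<Rightarrow> 'a" where "Wi = Hilbert_Choice.inv W"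
lemma W_Wi [simp]: "W (Wi t) = t" unfolding Wi_def using W_bij by (simp add: bij_is_surj surj_f_inv_f)
lemma Wi_W [simp]: "Wi (W t) = t" unfolding Wi_def using W_inj by simp

abbreviation "L \<equiv> Lmap p k \<alpha> \<sigma>"
abbreviation "PM \<equiv> pmul p k \<alpha> \<sigma>"
abbreviation "SM \<equiv> smul p k \<alpha> \<sigma>"

lemma sig0 [simp]: "\<sigma> 0 = 0" using p2 by simp
lemma zq [simp]: "(0::'a) ^ q = 0" using q0 by simp

lemma L_eq: "L u = (W (fst u), snd u)"
  by (simp add: Lmap_def pmul_def circk_def W_def)

lemma Linv_eq: "Hilbert_Choice.inv L = (\<lambda>z. (Wi (fst z), snd z))"
  by (rule inv_equality) (simp_all add: L_eq)

lemma L_Linv [simp]: "L (Hilbert_Choice.inv L z) = z" by (simp add: Linv_eq L_eq)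
lemma Linv_L [simp]: "Hilbert_Choice.inv L (L z) = z" by (simp add: Linv_eq L_eq)

lemma SM_L [simp]: "SM (L x) (L y) = PM x y" by (simp add: smul_def)

lemma PM_comm: "PM x y = PM y x"
  by (simp add: pmul_def circk_def algebra_simps)

lemma nucleus_iff:
  "a \<in> middle_nucleus SM \<longleftrightarrow>
   (\<forall>x y. PM (Hilbert_Choice.inv L (PM x (Hilbert_Choice.inv L a))) y
        = PM x (Hilbert_Choice.inv L (PM (Hilbert_Choice.inv L a) y)))"
proof -
  have "a \<in> middle_nucleus SM \<longleftrightarrow> (\<forall>x y. SM (SM (L x) a) (L y) = SM (L x) (SM a (L y)))"
    unfolding middle_nucleus_def
  proof (safe)
    fix x y assume "\<forall>x y. SM (SM x a) y = SM x (SM a y)"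
    thus "SM (SM (L x) a) (L y) = SM (L x) (SM a (L y))" by blast
  next
    fix x y assume h: "\<forall>x y. SM (SM (L x) a) (L y) = SM (L x) (SM a (L y))"
    have "SM (SM (L (Hilbert_Choice.inv L x)) a) (L (Hilbert_Choice.inv L y))
          = SM (L (Hilbert_Choice.inv L x)) (SM a (L (Hilbert_Choice.inv L y)))" using h by blast
    thus "SM (SM x a) y = SM x (SM a y)" by simp
  qed
  moreover have "(\<forall>x y. SM (SM (L x) a) (L y) = SM (L x) (SM a (L y))) \<longleftrightarrow>
   (\<forall>x y. PM (Hilbert_Choice.inv L (PM x (Hilbert_Choice.inv L a))) y
        = PM x (Hilbert_Choice.inv L (PM (Hilbert_Choice.inv L a) y)))" by (simp add: smul_def)
  ultimately show ?thesis by simp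
qed

lemma exists_nonfix:
  assumes "0 < n" "n < m"
  shows "\<exists>s::'a. s ^ (p ^ n) \<noteq> s"
proof (rule ccontr)
  assume "\<not> ?thesis"
  hence all: "\<forall>s::'a. s ^ (p ^ n) = s" by blast
  define P :: "'a poly" where "P = monom 1 (p ^ n) - monom 1 1"
  have "p ^ 0 < p ^ n" using assms p2 by (intro power_strict_increasing) auto
  hence pn: "p ^ n > 1" by simp
  have "coeff P (p ^ n) = 1" using pn by (simp add: P_def coeff_monom)
  hence "P \<noteq> 0" by auto
  have "degree (monom (1::'a) (p ^ n)) \<le> p ^ n" by (rule degree_monom_le)
  moreover have "degree (monom (1::'a) 1) \<le> p ^ n" using pn degree_monom_le[of "1::'a" 1] by simp
  ultimately have dP: "degree P \<le> p ^ n" unfolding P_def by (intro degree_diff_le)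
  have "{s. poly P s = 0} = UNIV" using all by (simp add: P_def poly_monom)
  hence "CARD('a) \<le> degree P" using card_poly_roots_bound[OF \<open>P \<noteq> 0\<close>] by simp
  moreover have "p ^ n < p ^ m" using assms p2 by (intro power_strict_increasing) auto
  ultimately show False using dP cardA by simp
qed

end



context sf begin

lemma T_lemma:
  assumes cq: "c ^ q = c" and dq: "d ^ q = d" and sd: "\<sigma> = id \<or> d = 0"
  shows "PM x (c, d) = L (c * fst x + \<alpha> * d * snd x, d * fst x + c * snd x)"
proof (cases "d = 0")
  case True
  thus ?thesis using cq
    by (simp add: pmul_def circk_def L_eq W_def power_mult_distrib algebra_simps)
next
  case False
  hence sid: "z ^ (p ^ r) = z" for z :: 'a using sd by (metis id_apply)
  show ?thesis using cq dq \<alpha>q unfolding L_eq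
    by (simp add: pmul_def circk_def W_def sid fadd power_mult_distrib algebra_simps)
qed

lemma T_comm:
  assumes cq: "c ^ q = c" and dq: "d ^ q = d" and sd: "\<sigma> = id \<or> d = 0"
  shows "PM (c * fst x + \<alpha> * d * snd x, d * fst x + c * snd x) y
       = PM x (c * fst y + \<alpha> * d * snd y, d * fst y + c * snd y)"
proof (cases "d = 0")
  case True
  thus ?thesis using cq
    by (simp add: pmul_def circk_def power_mult_distrib algebra_simps)
next
  case False
  hence sid: "z ^ (p ^ r) = z" for z :: 'a using sd by (metis id_apply)
  show ?thesis using cq dq \<alpha>q
    by (simp add: pmul_def circk_def sid fadd power_mult_distrib algebra_simps)
qed

lemma nuc_sup:
  assumes cl: "c ^ (p ^ l) = c" and dl: "d ^ (p ^ l) = d" and sd: "\<sigma> = id \<or> d = 0"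
  shows "L (c, d) \<in> middle_nucleus SM"
proof -
  have cq: "c ^ q = c" using fix_l_k[OF cl] .
  have dq: "d ^ q = d" using fix_l_k[OF dl] .
  show ?thesis
  proof (subst nucleus_iff, intro allI)
    fix x y
    have "Hilbert_Choice.inv L (PM x (c, d)) = (c * fst x + \<alpha> * d * snd x, d * fst x + c * snd x)"
      using T_lemma[OF cq dq sd] by simp
    moreover have "Hilbert_Choice.inv L (PM (c, d) y) = (c * fst y + \<alpha> * d * snd y, d * fst y + c * snd y)"
      using T_lemma[OF cq dq sd, of y] PM_comm[of "(c, d)" y] by simp
    ultimately show "PM (Hilbert_Choice.inv L (PM x (Hilbert_Choice.inv L (L (c, d))))) y =
         PM x (Hilbert_Choice.inv L (PM (Hilbert_Choice.inv L (L (c, d))) y))"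
      using T_comm[OF cq dq sd] by simp
  qed
qed

lemma SM_D:
  assumes cl: "c ^ (p ^ l) = c" and dl: "d ^ (p ^ l) = d" and sd: "\<sigma> = id \<or> d = 0"
  shows "SM (L (c', d')) (L (c, d)) = L (c * c' + \<alpha> * d * d', d * c' + c * d')"
  using T_lemma[OF fix_l_k[OF cl] fix_l_k[OF dl] sd, of "(c', d')"] by simp

lemma L_add: "L x + L y = L (x + y)"
  by (simp add: L_eq W_add plus_prod_def)

end



context sf begin

lemma k_lt_m: "k < m" using km m0 by simp

lemma kr_lt_m: "k + r < m"
proof (rule ccontr)
  assume "\<not> k + r < m"
  hence "m = 2 * k" using km rm by linarith
  hence "gcd m k = k" by simp
  hence "m div l = 2" using \<open>m = 2 * k\<close> k0 by simp
  thus False using oddml by simp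
qed

lemma ring_aux: "(x1::'a) * y1 + s1 * u1 = x1 * u1 + y1 * s1 \<Longrightarrow> (x1 - s1) * (u1 - y1) = 0"
proof -
  assume eq: "x1 * y1 + s1 * u1 = x1 * u1 + y1 * s1"
  have "(x1 - s1) * (u1 - y1) = (x1 * u1 + y1 * s1) - (x1 * y1 + s1 * u1)" by (simp add: algebra_simps)
  also have "\<dots> = 0" using eq by simp
  finally show ?thesis .
qed

lemma nuc_sub:
  assumes a: "a \<in> middle_nucleus SM" and uv: "Hilbert_Choice.inv L a = (u, v)"
  shows "u ^ (p ^ l) = u \<and> v ^ (p ^ l) = v \<and> (\<sigma> \<noteq> id \<longrightarrow> v = 0)"
proof -
  have H: "\<And>x y. PM (Hilbert_Choice.inv L (PM x (u, v))) y = PM x (Hilbert_Choice.inv L (PM (u, v) y))"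
  proof -
    have "\<forall>x y. PM (Hilbert_Choice.inv L (PM x (Hilbert_Choice.inv L a))) y
        = PM x (Hilbert_Choice.inv L (PM (Hilbert_Choice.inv L a) y))" using a nucleus_iff by blast
    thus "\<And>x y. PM (Hilbert_Choice.inv L (PM x (u, v))) y = PM x (Hilbert_Choice.inv L (PM (u, v) y))"
      unfolding uv by blast
  qed
  obtain s0 :: 'a where s0: "s0 ^ q \<noteq> s0" using exists_nonfix[OF k0 k_lt_m] by blast
  have E1: "W (s * u) = s ^ q * u + u ^ q * s" for s
  proof -
    have "snd (PM (Hilbert_Choice.inv L (PM (s, 0) (u, v))) (0, 1)) = snd (PM (s, 0) (Hilbert_Choice.inv L (PM (u, v) (0, 1))))"
      using H by simp
    hence "Wi (s ^ q * u + u ^ q * s) = s * u" by (simp add: pmul_def circk_def Linv_eq)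
    hence "W (Wi (s ^ q * u + u ^ q * s)) = W (s * u)" by simp
    thus ?thesis by simp
  qed
  define c where "c = Wi (\<alpha> * (v ^ q + v) ^ (p ^ r))"
  have E2: "W (s * c) = \<alpha> * (s ^ q * v + v ^ q * s) ^ (p ^ r)" for s
  proof -
    have "snd (PM (Hilbert_Choice.inv L (PM (0, s) (u, v))) (0, 1)) = snd (PM (0, s) (Hilbert_Choice.inv L (PM (u, v) (0, 1))))"
      using H by simp
    hence "Wi (\<alpha> * (s ^ q * v + v ^ q * s) ^ (p ^ r)) = s * c" by (simp add: pmul_def circk_def Linv_eq c_def)
    hence "W (Wi (\<alpha> * (s ^ q * v + v ^ q * s) ^ (p ^ r))) = W (s * c)" by simp
    thus ?thesis by simp
  qed
  have "s0 ^ q * u ^ q + s0 * u = s0 ^ q * u + u ^ q * s0"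
    using E1[of s0] by (simp add: W_def power_mult_distrib)
  hence "(s0 ^ q - s0) * (u - u ^ q) = 0" by (rule ring_aux)
  hence "u ^ q = u" using s0 by simp
  hence ul: "u ^ (p ^ l) = u" by (rule fix_k_l)
  show ?thesis
  proof (cases "\<sigma> = id")
    case True
    hence sid: "z ^ (p ^ r) = z" for z :: 'a by (metis id_apply)
    have e1: "c ^ q + c = \<alpha> * v + \<alpha> * v ^ q" using E2[of 1] by (simp add: W_def sid algebra_simps)
    have e0: "s0 ^ q * c ^ q + s0 * c = \<alpha> * (s0 ^ q * v) + \<alpha> * (v ^ q * s0)"
      using E2[of s0] by (simp add: W_def sid power_mult_distrib algebra_simps)
    have "(s0 ^ q - s0) * (c ^ q - \<alpha> * v) = (s0 ^ q * c ^ q + s0 * c - (\<alpha> * (s0 ^ q * v) + \<alpha> * (v ^ q * s0)))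
             - s0 * (c ^ q + c - (\<alpha> * v + \<alpha> * v ^ q))" by (simp add: algebra_simps)
    also have "\<dots> = 0" using e0 e1 by simp
    finally have cq: "c ^ q = \<alpha> * v" using s0 by simp
    have cv: "c = \<alpha> * v ^ q" using e1 cq by simp
    have "\<alpha> * (v ^ q) ^ q = c ^ q" using cv \<alpha>q by (simp add: power_mult_distrib)
    hence "\<alpha> * (v ^ q) ^ q = \<alpha> * v" using cq by simp
    hence vv: "(v ^ q) ^ q = v" using \<alpha>0 by simp
    have "v ^ (p ^ (2 * k)) = (v ^ q) ^ q" by (simp add: power_mult power_add mult_2)
    hence "v ^ (p ^ (2 * k)) = v" using vv by simp
    hence "v ^ (p ^ gcd (2 * k) m) = v" using fix_gcd[of v p "2 * k" m] fixm by simp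
    hence "v ^ (p ^ l) = v" using gcd2 by simp
    thus ?thesis using ul True by simp
  next
    case False
    have "r \<noteq> 0"
    proof
      assume "r = 0"
      hence "\<sigma> = id" by (simp add: fun_eq_iff)
      thus False using False by simp
    qed
    define e1 where "e1 = p ^ (k + r)"
    have pe: "(s ^ q) ^ (p ^ r) = s ^ e1" for s :: 'a by (simp add: e1_def power_mult power_add)
    define Pl :: "'a poly" where
      "Pl = monom (\<alpha> * v ^ (p ^ r)) e1 + monom (\<alpha> * v ^ e1) (p ^ r) - monom (c ^ q) q - monom c 1"
    have "poly Pl s = 0" for s
    proof -
      have "W (s * c) = \<alpha> * (s ^ q * v + v ^ q * s) ^ (p ^ r)" by (rule E2)
      hence "s ^ q * c ^ q + s * c = \<alpha> * (s ^ e1 * v ^ (p ^ r) + v ^ e1 * s ^ (p ^ r))"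
        by (simp add: W_def fadd power_mult_distrib pe)
      thus ?thesis by (simp add: Pl_def poly_monom algebra_simps)
    qed
    hence allr: "{s. poly Pl s = 0} = UNIV" by simp
    have ne: "e1 \<noteq> p ^ r" "e1 \<noteq> q" "e1 \<noteq> 1" unfolding e1_def using p2 k0 \<open>r \<noteq> 0\<close>
      by (simp_all add: power_inject_exp)
    have "Pl = 0"
    proof (rule ccontr)
      assume "Pl \<noteq> 0"
      have "degree (monom (\<alpha> * v ^ (p ^ r)) e1) \<le> e1" by (rule degree_monom_le)
      moreover have "degree (monom (\<alpha> * v ^ e1) (p ^ r)) \<le> e1"
        using degree_monom_le[of "\<alpha> * v ^ e1" "p ^ r"] p2 unfolding e1_def
        by (meson le_add2 le_trans one_le_numeral order_trans power_increasing)
      moreover have "degree (monom (c ^ q) q) \<le> e1"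
        using degree_monom_le[of "c ^ q" q] p2 unfolding e1_def
        by (meson le_add1 le_trans one_le_numeral order_trans power_increasing)
      moreover have "degree (monom c 1) \<le> e1"
      proof -
        have "1 \<le> e1" unfolding e1_def using p2 by simp
        thus ?thesis using degree_monom_le[of c 1] by linarith
      qed
      ultimately have "degree Pl \<le> e1" unfolding Pl_def
        by (intro degree_diff_le degree_add_le) auto
      moreover have "CARD('a) \<le> degree Pl" using card_poly_roots_bound[OF \<open>Pl \<noteq> 0\<close>] allr by simp
      moreover have "e1 < p ^ m" unfolding e1_def using kr_lt_m p2 by (intro power_strict_increasing) auto
      ultimately show False using cardA by simp
    qed
    hence "coeff Pl e1 = 0" by simp
    hence "\<alpha> * v ^ (p ^ r) = 0" using ne by (simp add: Pl_def coeff_monom)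
    hence "v = 0" using \<alpha>0 by simp
    thus ?thesis using ul p2 by simp
  qed
qed

end



lemma fixp_add: "CHAR('b::field) = p \<Longrightarrow> prime p \<Longrightarrow> x ^ (p ^ n) = x \<Longrightarrow> y ^ (p ^ n) = y \<Longrightarrow> (x + y) ^ (p ^ n) = (x + y :: 'b)"
  by (simp add: frob_add)
lemma fixp_diff: "CHAR('b::field) = p \<Longrightarrow> prime p \<Longrightarrow> x ^ (p ^ n) = x \<Longrightarrow> y ^ (p ^ n) = y \<Longrightarrow> (x - y) ^ (p ^ n) = (x - y :: 'b)"
  by (simp add: frob_diff)
lemma fixp_mult: "x ^ n = x \<Longrightarrow> y ^ n = y \<Longrightarrow> (x * y) ^ n = (x * y :: 'b::comm_monoid_mult)"
  by (simp add: power_mult_distrib)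
lemma fixp_div: "x ^ n = x \<Longrightarrow> y ^ n = y \<Longrightarrow> (x / y) ^ n = (x / y :: 'b::field)"
  by (simp add: power_divide)

context sf begin

abbreviation "K \<equiv> {x::'a. x ^ (p ^ l) = x}"

lemma Kcard: "card K = p ^ l" using card_fix[OF pr cardA ldm l0] .

lemma Q1: "p ^ l > 1"
proof -
  have "p ^ 0 < p ^ l" using p2 l0 by (intro power_strict_increasing) auto
  thus ?thesis by simp
qed

lemma L_inj: "inj L" by (metis Linv_L injI)

lemma nuc_eq0:
  assumes "\<sigma> \<noteq> id"
  shows "middle_nucleus SM = (\<lambda>c. L (c, 0)) ` K"
proof
  show "middle_nucleus SM \<subseteq> (\<lambda>c. L (c, 0)) ` K"
  proof
    fix a assume a: "a \<in> middle_nucleus SM"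
    obtain u v where uv: "Hilbert_Choice.inv L a = (u, v)" by (cases "Hilbert_Choice.inv L a") auto
    have "u ^ (p ^ l) = u" "v = 0" using nuc_sub[OF a uv] assms by auto
    moreover have "a = L (u, v)" using uv L_Linv[of a] by simp
    ultimately show "a \<in> (\<lambda>c. L (c, 0)) ` K" by blast
  qed
next
  show "(\<lambda>c. L (c, 0)) ` K \<subseteq> middle_nucleus SM"
    using nuc_sup[of _ 0] p2 by auto
qed

lemma nuc_eqid:
  assumes "\<sigma> = id"
  shows "middle_nucleus SM = L ` (K \<times> K)"
proof
  show "middle_nucleus SM \<subseteq> L ` (K \<times> K)"
  proof
    fix a assume a: "a \<in> middle_nucleus SM"
    obtain u v where uv: "Hilbert_Choice.inv L a = (u, v)" by (cases "Hilbert_Choice.inv L a") auto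
    have "u ^ (p ^ l) = u" "v ^ (p ^ l) = v" using nuc_sub[OF a uv] by auto
    moreover have "a = L (u, v)" using uv L_Linv[of a] by simp
    ultimately show "a \<in> L ` (K \<times> K)" by blast
  qed
next
  show "L ` (K \<times> K) \<subseteq> middle_nucleus SM"
    using nuc_sup assms by auto
qed

lemma case2:
  assumes sig: "\<sigma> \<noteq> id" and cc: "CARD('c::{field,finite}) = p ^ l"
  shows "\<exists>g :: 'a \<times> 'a \<Rightarrow> 'c. iso_onto_field (middle_nucleus SM) SM g"
proof -
  have charc: "CHAR('c) = p" using char_eq[OF pr cc l0] .
  obtain \<gamma> :: 'c where gen: "\<forall>x. x \<noteq> 0 \<longrightarrow> (\<exists>i::nat. x = \<gamma> ^ i)" using cyclic_gen by blast
  have SQ: "x ^ (p ^ l) = x" for x :: 'c using pow_card_same[of x] cc by simp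
  have genS: "\<forall>x\<in>UNIV. \<exists>h. x = evp \<gamma> h"
  proof
    fix x :: 'c
    show "\<exists>h. x = evp \<gamma> h"
    proof (cases "x = 0")
      case True thus ?thesis by (intro exI[of _ 0]) simp
    next
      case False
      then obtain i where "x = \<gamma> ^ i" using gen by blast
      thus ?thesis by (intro exI[of _ "monom 1 i"]) simp
    qed
  qed
  obtain \<phi> :: "'c \<Rightarrow> 'a" where inj: "inj_on \<phi> UNIV" and img: "\<phi> ` UNIV \<subseteq> K"
    and hom: "\<forall>x\<in>UNIV. \<forall>y\<in>UNIV. \<phi> (x + y) = \<phi> x + \<phi> y \<and> \<phi> (x * y) = \<phi> x * \<phi> y"
    using field_embed[OF charc charp Q1 SQ Kcard genS] SQ by blast
  have "card (\<phi> ` UNIV) = card K" using card_image[OF inj] cc Kcard by simp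
  hence imgeq: "\<phi> ` UNIV = K" using img by (intro card_subset_eq) auto
  define F where "F z = L (\<phi> z, 0)" for z
  have Finj: "inj F" unfolding F_def using inj L_inj by (auto simp: inj_on_def)
  have NF: "middle_nucleus SM = range F" unfolding nuc_eq0[OF sig] F_def imgeq[symmetric] by auto
  have Fadd: "F x + F y = F (x + y)" for x y
    unfolding F_def using hom by (simp add: L_add)
  have Fmul: "SM (F x) (F y) = F (x * y)" for x y
  proof -
    have "\<phi> x \<in> K" "\<phi> y \<in> K" using img by auto
    hence "SM (L (\<phi> x, 0)) (L (\<phi> y, 0)) = L (\<phi> y * \<phi> x + \<alpha> * 0 * 0, 0 * \<phi> x + \<phi> y * 0)"
      using SM_D[of "\<phi> y" 0 "\<phi> x" 0] p2 by simp
    thus ?thesis unfolding F_def using hom by (simp add: mult.commute)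
  qed
  show ?thesis
  proof (intro exI[of _ "inv_into UNIV F"])
    show "iso_onto_field (middle_nucleus SM) SM (inv_into UNIV F)"
      unfolding iso_onto_field_def NF
    proof (intro conjI ballI)
      show "bij_betw (inv_into UNIV F) (range F) UNIV"
        by (rule bij_betw_inv_into) (rule bij_betw_imageI[OF Finj refl])
    next
      fix x y assume "x \<in> range F" "y \<in> range F"
      then obtain a b where ab: "x = F a" "y = F b" by blast
      show "inv_into UNIV F (x + y) = inv_into UNIV F x + inv_into UNIV F y"
        unfolding ab Fadd using Finj by simp
      show "inv_into UNIV F (SM x y) = inv_into UNIV F x * inv_into UNIV F y"
        unfolding ab Fmul using Finj by simp
    qed
  qed
qed

end



context sf begin

lemma Kadd: "x \<in> K \<Longrightarrow> y \<in> K \<Longrightarrow> x + y \<in> K" using fixp_add[OF charp pr] by simp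
lemma Kmul: "x \<in> K \<Longrightarrow> y \<in> K \<Longrightarrow> x * y \<in> K" using fixp_mult by simp

lemma case1:
  assumes sig: "\<sigma> = id" and cb: "CARD('b::{field,finite}) = p ^ (2 * l)"
  shows "\<exists>f :: 'a \<times> 'a \<Rightarrow> 'b. iso_onto_field (middle_nucleus SM) SM f"
proof -
  define Q where "Q = p ^ l"
  have Q1': "Q > 1" using Q1 Q_def by simp
  have cbQ: "CARD('b) = Q * Q" using cb unfolding Q_def by (simp add: mult_2 power_add)
  have charb: "CHAR('b) = p" using char_eq[OF pr cb] l0 by simp
  obtain g :: 'b where gen: "\<forall>x. x \<noteq> 0 \<longrightarrow> (\<exists>i::nat. x = g ^ i)" using cyclic_gen by blast
  define \<gamma> where "\<gamma> = g ^ (Q + 1)"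
  have gQQ: "g ^ (Q * Q) = g" using pow_card_same[of g] cbQ by simp
  have "\<gamma> ^ Q = g ^ (Q * Q) * g ^ Q" unfolding \<gamma>_def by (simp add: power_mult[symmetric] power_add algebra_simps)
  hence \<gamma>Q: "\<gamma> ^ Q = \<gamma>" using gQQ unfolding \<gamma>_def by (simp add: power_add mult.commute)
  define Kb where "Kb = {x::'b. x ^ Q = x}"
  have KbQ: "card Kb = Q" unfolding Kb_def Q_def using card_fix[OF pr cb, of l] l0 by simp
  have genS: "\<forall>x\<in>Kb. \<exists>h. x = evp \<gamma> h"
  proof
    fix x assume x: "x \<in> Kb"
    show "\<exists>h. x = evp \<gamma> h"
    proof (cases "x = 0")
      case True thus ?thesis by (intro exI[of _ 0]) simp
    next
      case False
      then obtain j where "x = g ^ ((Q + 1) * j)" using sub_gen[OF gen cbQ Q1'] x unfolding Kb_def by blast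
      hence "x = \<gamma> ^ j" unfolding \<gamma>_def by (simp only: power_mult)
      thus ?thesis by (intro exI[of _ "monom 1 j"]) simp
    qed
  qed
  have KcardQ: "card {x::'a. x ^ Q = x} = Q" using Kcard Q_def by simp
  obtain \<phi> :: "'b \<Rightarrow> 'a" where inj: "inj_on \<phi> Kb" and img: "\<phi> ` Kb \<subseteq> {x. x ^ Q = x}"
    and hom: "\<forall>x\<in>Kb. \<forall>y\<in>Kb. \<phi> (x + y) = \<phi> x + \<phi> y \<and> \<phi> (x * y) = \<phi> x * \<phi> y"
    using field_embed[OF charb charp Q1' \<gamma>Q KcardQ genS] unfolding Kb_def by auto
  have "card (\<phi> ` Kb) = card {x::'a. x ^ Q = x}" using card_image[OF inj] KbQ KcardQ by simp
  hence imgeq: "\<phi> ` Kb = K" using img unfolding Q_def by (intro card_subset_eq) auto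
  define \<psi> where "\<psi> = inv_into Kb \<phi>"
  have \<psi>K: "\<psi> x \<in> Kb" if "x \<in> K" for x using that imgeq unfolding \<psi>_def by (metis inv_into_into)
  have \<phi>\<psi>: "\<phi> (\<psi> x) = x" if "x \<in> K" for x using that imgeq unfolding \<psi>_def by (metis f_inv_into_f)
  have \<psi>\<phi>: "\<psi> (\<phi> z) = z" if "z \<in> Kb" for z using that inj unfolding \<psi>_def by simp
  have \<psi>inj: "x = y" if "x \<in> K" "y \<in> K" "\<psi> x = \<psi> y" for x y using that \<phi>\<psi> by metis
  have Kbadd: "x + y \<in> Kb" if "x \<in> Kb" "y \<in> Kb" for x y
    using that fixp_add[OF charb pr] unfolding Kb_def Q_def by simp
  have Kbmul: "x * y \<in> Kb" if "x \<in> Kb" "y \<in> Kb" for x y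
    using that fixp_mult unfolding Kb_def by simp
  have Kbdiff: "x - y \<in> Kb" if "x \<in> Kb" "y \<in> Kb" for x y
    using that fixp_diff[OF charb pr] unfolding Kb_def Q_def by simp
  have Kbdiv: "x / y \<in> Kb" if "x \<in> Kb" "y \<in> Kb" for x y
    using that fixp_div unfolding Kb_def by simp
  have \<psi>add: "\<psi> (x + y) = \<psi> x + \<psi> y" if "x \<in> K" "y \<in> K" for x y
  proof -
    have "\<phi> (\<psi> x + \<psi> y) = x + y" using hom \<psi>K \<phi>\<psi> that by simp
    hence "\<psi> (x + y) = \<psi> (\<phi> (\<psi> x + \<psi> y))" by simp
    thus ?thesis using \<psi>\<phi> Kbadd \<psi>K that by simp
  qed
  have \<psi>mul: "\<psi> (x * y) = \<psi> x * \<psi> y" if "x \<in> K" "y \<in> K" for x y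
  proof -
    have "\<phi> (\<psi> x * \<psi> y) = x * y" using hom \<psi>K \<phi>\<psi> that by simp
    hence "\<psi> (x * y) = \<psi> (\<phi> (\<psi> x * \<psi> y))" by simp
    thus ?thesis using \<psi>\<phi> Kbmul \<psi>K that by simp
  qed
  have \<alpha>K: "\<alpha> \<in> K" using \<alpha>l by simp
  have 0: "0 \<in> Kb" using Q1' unfolding Kb_def by simp
  have "\<phi> (0 + 0) = \<phi> 0 + \<phi> 0" using hom 0 by blast
  hence \<phi>0: "\<phi> 0 = 0" by (simp only: add_0_left add_cancel_right_right)
  have "\<psi> \<alpha> \<noteq> 0"
  proof
    assume "\<psi> \<alpha> = 0"
    hence "\<alpha> = \<phi> 0" using \<phi>\<psi>[OF \<alpha>K] by simp
    thus False using \<phi>0 \<alpha>0 by simp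
  qed
  then obtain j where j: "\<psi> \<alpha> = g ^ ((Q + 1) * j)"
    using sub_gen[OF gen cbQ Q1'] \<psi>K[OF \<alpha>K] unfolding Kb_def by blast
  have "odd Q" unfolding Q_def using oddp by simp
  then obtain t where t: "Q + 1 = 2 * t" by (metis evenE odd_Suc_div_two odd_even_add odd_one)
  define \<beta> where "\<beta> = g ^ (t * j)"
  have e: "(Q + 1) * j = t * j + t * j" using t by simp
  have \<beta>2: "\<beta> * \<beta> = \<psi> \<alpha>" unfolding \<beta>_def j e by (simp only: power_add)
  define G where "G a = \<psi> (fst (Hilbert_Choice.inv L a)) + \<psi> (snd (Hilbert_Choice.inv L a)) * \<beta>" for a
  have GL: "G (L (c, d)) = \<psi> c + \<psi> d * \<beta>" for c d unfolding G_def by simp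
  have N: "middle_nucleus SM = L ` (K \<times> K)" using nuc_eqid[OF sig] .
  have Ginj: "inj_on G (L ` (K \<times> K))"
  proof (rule inj_onI)
    fix a b assume "a \<in> L ` (K \<times> K)" "b \<in> L ` (K \<times> K)" and eq: "G a = G b"
    then obtain c d c' d' where cd: "a = L (c, d)" "b = L (c', d')" "c \<in> K" "d \<in> K" "c' \<in> K" "d' \<in> K"
      by blast
    have eq': "\<psi> c + \<psi> d * \<beta> = \<psi> c' + \<psi> d' * \<beta>" using eq cd GL by simp
    have "\<psi> d = \<psi> d'"
    proof (rule ccontr)
      assume ne: "\<psi> d \<noteq> \<psi> d'"
      have "(\<psi> d - \<psi> d') * \<beta> = \<psi> c' - \<psi> c" using eq' by (simp add: algebra_simps)
      hence b: "\<beta> = (\<psi> c' - \<psi> c) / (\<psi> d - \<psi> d')" using ne by (simp add: field_simps)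
      have "\<beta> \<in> Kb" unfolding b using cd \<psi>K by (intro Kbdiv Kbdiff) auto
      define s where "s = \<phi> \<beta>"
      have sK: "s \<in> K" using \<open>\<beta> \<in> Kb\<close> imgeq s_def by blast
      have "\<psi> s = \<beta>" using \<psi>\<phi> \<open>\<beta> \<in> Kb\<close> s_def by simp
      hence "\<psi> (s * s) = \<psi> \<alpha>" using \<psi>mul[OF sK sK] \<beta>2 by simp
      hence "s * s = \<alpha>" using \<psi>inj[OF Kmul[OF sK sK] \<alpha>K] by simp
      thus False using nsq by (metis power2_eq_square)
    qed
    hence "d = d'" using \<psi>inj cd by blast
    moreover hence "\<psi> c = \<psi> c'" using eq' by simp
    hence "c = c'" using \<psi>inj cd by blast
    ultimately show "a = b" using cd by simp
  qed
  have "card (G ` (L ` (K \<times> K))) = card (K \<times> K)"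
    using card_image[OF Ginj] card_image[OF inj_on_subset[OF L_inj]] by simp
  also have "\<dots> = Q * Q" using Kcard Q_def by (simp add: card_cartesian_product)
  finally have "G ` (L ` (K \<times> K)) = UNIV" using cbQ by (intro card_subset_eq) auto
  hence bij: "bij_betw G (L ` (K \<times> K)) UNIV" using Ginj by (simp add: bij_betw_def)
  show ?thesis
  proof (intro exI[of _ G])
    show "iso_onto_field (middle_nucleus SM) SM G"
      unfolding iso_onto_field_def N
    proof (intro conjI ballI bij)
      fix a b assume "a \<in> L ` (K \<times> K)" "b \<in> L ` (K \<times> K)"
      then obtain c d c' d' where cd: "a = L (c, d)" "b = L (c', d')" "c \<in> K" "d \<in> K" "c' \<in> K" "d' \<in> K"
        by blast
      have "a + b = L (c + c', d + d')" using cd L_add by simp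
      thus "G (a + b) = G a + G b" using cd GL \<psi>add by (simp add: algebra_simps)
      have "SM a b = L (c' * c + \<alpha> * d' * d, d' * c + c' * d)"
        using cd SM_D[of c' d' c d] sig by simp
      hence "G (SM a b) = \<psi> c' * \<psi> c + \<psi> \<alpha> * \<psi> d' * \<psi> d + (\<psi> d' * \<psi> c + \<psi> c' * \<psi> d) * \<beta>"
        using GL cd \<psi>add \<psi>mul Kmul Kadd \<alpha>K by simp
      also have "\<dots> = (\<psi> c + \<psi> d * \<beta>) * (\<psi> c' + \<psi> d' * \<beta>)"
        using \<beta>2[symmetric] by (simp add: algebra_simps)
      finally show "G (SM a b) = G a * G b" using cd GL by simp
    qed
  qed
qed

end

theorem theorem2:
  fixes p m k r :: nat and \<alpha> :: "'a::{field,finite}"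
  assumes "prime p" and "odd p"
    and "CARD('a) = p ^ m"
    and "0 < k" and "k \<le> m div 2"
    and "odd (m div gcd m k)"
    and "\<alpha> ^ (p ^ gcd m k) = \<alpha>" and "\<alpha> \<noteq> 0"
    and "\<not> (\<exists>y. \<alpha> = y ^ 2)"
    and "r \<le> m div 2"
  shows "((\<lambda>x::'a. x ^ (p ^ r)) = id \<longrightarrow> CARD('b::{field,finite}) = p ^ (2 * gcd m k) \<longrightarrow>
            (\<exists>f :: 'a \<times> 'a \<Rightarrow> 'b. iso_onto_field
               (middle_nucleus (smul p k \<alpha> (\<lambda>x. x ^ (p ^ r))))
               (smul p k \<alpha> (\<lambda>x. x ^ (p ^ r))) f))
       \<and> ((\<lambda>x::'a. x ^ (p ^ r)) \<noteq> id \<longrightarrow> CARD('c::{field,finite}) = p ^ gcd m k \<longrightarrow>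
            (\<exists>g :: 'a \<times> 'a \<Rightarrow> 'c. iso_onto_field
               (middle_nucleus (smul p k \<alpha> (\<lambda>x. x ^ (p ^ r))))
               (smul p k \<alpha> (\<lambda>x. x ^ (p ^ r))) g))"
proof -
  interpret sf p m k r \<alpha> using assms by unfold_locales auto
  show ?thesis using case1 case2 by blast
qed

end
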